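(* Fix nonnegative integers $p,q,p',q'$, set $k=p+q$, $n=p+q+p'+q'$, and $H=O(p,q)\times O(p',q')$. For $r,s\ge0$ let $\mathbb T^{r,s}=(\mathbb R^{k*})^{\otimes r}\otimes(\mathbb R^{n-k\,*})^{\otimes s}$ with its natural $H$-action. Let $\mathbf T=\mathbb T^{r_1,s_1}\oplus\cdots\oplus\mathbb T^{r_L,s_L}$ for some nonnegative integers $r_i,s_i$, and let $\mathcal E\subset\mathbf T$ be a nonempty $H$-invariant subset. If $P$ is a polynomial on $\mathbf T$ whose restriction to $\mathcal E$ is $H$-invariant, then there is a polynomial $P'$ on $\mathbf T$ which is $H$-invariant on all of $\mathbf T$ and satisfies $P'=P$ on $\mathcal E$.
   Context: $O(p,q)$ acts on $\mathbb R^k$ preserving a quadratic form of signature $(p,q)$ and $O(p',q')$ acts on $\mathbb R^{n-k}$ preserving a form of signature $(p',q')$; $H$ acts on $\mathbb T^{r,s}$ by the induced action on duals and tensor products, and diagonally on $\mathbf T$. *)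

theory Defs
  imports Complex_Main
begin

definition eta :: "nat \<Rightarrow> nat \<Rightarrow> real" where
  "eta p i = (if i < p then 1 else -1)"

definition Ogrp :: "nat \<Rightarrow> nat \<Rightarrow> (nat \<Rightarrow> nat \<Rightarrow> real) set" where
  "Ogrp p q = {A. \<forall>i<p+q. \<forall>j<p+q.
      (\<Sum>l<p+q. A l i * eta p l * A l j) = (if i = j then eta p i else 0)}"

text \<open>Inverse of A in O(p,q): eta A^T eta.\<close>
definition Oinv :: "nat \<Rightarrow> (nat \<Rightarrow> nat \<Rightarrow> real) \<Rightarrow> nat \<Rightarrow> nat \<Rightarrow> real" where
  "Oinv p A = (\<lambda>i j. eta p i * A j i * eta p j)"

definition Hgrp :: "nat \<Rightarrow> nat \<Rightarrow> nat \<Rightarrow> nat \<Rightarrow> ((nat \<Rightarrow> nat \<Rightarrow> real) \<times> (nat \<Rightarrow> nat \<Rightarrow> real)) set" where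
  "Hgrp p q p' q' = Ogrp p q \<times> Ogrp p' q'"

definition tuples :: "nat \<Rightarrow> nat \<Rightarrow> nat list set" where
  "tuples d r = {I. length I = r \<and> set I \<subseteq> {..<d}}"

text \<open>Coordinates of T = T^{r_0,s_0} + ... + T^{r_(L-1),s_(L-1)}: a coordinate is
  (summand index i, multi-index into (R^k)^r_i, multi-index into (R^(n-k))^s_i).\<close>
definition Idx :: "nat \<Rightarrow> nat \<Rightarrow> nat \<Rightarrow> nat \<Rightarrow> nat \<Rightarrow> (nat \<Rightarrow> nat) \<Rightarrow> (nat \<Rightarrow> nat)
    \<Rightarrow> (nat \<times> nat list \<times> nat list) set" where
  "Idx p q p' q' L r s = {(i, I, J). i < L \<and> I \<in> tuples (p+q) (r i) \<and> J \<in> tuples (p'+q') (s i)}"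

definition Tsp :: "nat \<Rightarrow> nat \<Rightarrow> nat \<Rightarrow> nat \<Rightarrow> nat \<Rightarrow> (nat \<Rightarrow> nat) \<Rightarrow> (nat \<Rightarrow> nat)
    \<Rightarrow> (nat \<times> nat list \<times> nat list \<Rightarrow> real) set" where
  "Tsp p q p' q' L r s = {x. \<forall>z. z \<notin> Idx p q p' q' L r s \<longrightarrow> x z = 0}"

text \<open>Natural action of h = (A,B) on dual tensors: (h.t)(v_1,..,w_s) = t(A^-1 v_1,..,B^-1 w_s),
  i.e. in coordinates each covector index is contracted with A^-1 (resp. B^-1).\<close>
definition act :: "nat \<Rightarrow> nat \<Rightarrow> nat \<Rightarrow> nat \<Rightarrow> nat \<Rightarrow> (nat \<Rightarrow> nat) \<Rightarrow> (nat \<Rightarrow> nat)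
    \<Rightarrow> (nat \<Rightarrow> nat \<Rightarrow> real) \<times> (nat \<Rightarrow> nat \<Rightarrow> real)
    \<Rightarrow> (nat \<times> nat list \<times> nat list \<Rightarrow> real) \<Rightarrow> (nat \<times> nat list \<times> nat list \<Rightarrow> real)" where
  "act p q p' q' L r s h x = (\<lambda>(i, I, J).
     if (i, I, J) \<in> Idx p q p' q' L r s then
       (\<Sum>I'\<in>tuples (p+q) (r i). \<Sum>J'\<in>tuples (p'+q') (s i).
          x (i, I', J') * (\<Prod>a<r i. Oinv p (fst h) (I' ! a) (I ! a))
                        * (\<Prod>b<s i. Oinv p' (snd h) (J' ! b) (J ! b)))
     else 0)"

inductive_set poly_on :: "'z set \<Rightarrow> (('z \<Rightarrow> real) \<Rightarrow> real) set" for Z :: "'z set" where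
  const: "(\<lambda>x. c) \<in> poly_on Z"
| coord: "z \<in> Z \<Longrightarrow> (\<lambda>x. x z) \<in> poly_on Z"
| add: "P \<in> poly_on Z \<Longrightarrow> Q \<in> poly_on Z \<Longrightarrow> (\<lambda>x. P x + Q x) \<in> poly_on Z"
| mult: "P \<in> poly_on Z \<Longrightarrow> Q \<in> poly_on Z \<Longrightarrow> (\<lambda>x. P x * Q x) \<in> poly_on Z"

end

theory Submission
  imports Defs "HOL-Library.Function_Algebras" "Jordan_Normal_Form.Determinant"
begin


global_interpretation fv: vector_space "\<lambda>(r::real) (f::'w \<Rightarrow> real). (\<lambda>w. r * f w)"
  by unfold_locales (auto simp: algebra_simps)

definition ipS :: "'w set \<Rightarrow> ('w \<Rightarrow> real) \<Rightarrow> ('w \<Rightarrow> real) \<Rightarrow> real" where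
  "ipS S f g = (\<Sum>w\<in>S. f w * g w)"

lemma ipS_add2: "ipS S f (g + h) = ipS S f g + ipS S f h"
  by (simp add: ipS_def algebra_simps sum.distrib)
lemma ipS_add1: "ipS S (g + h) f = ipS S g f + ipS S h f"
  by (simp add: ipS_def algebra_simps sum.distrib)
lemma ipS_diff2: "ipS S f (g - h) = ipS S f g - ipS S f h"
  by (simp add: ipS_def algebra_simps sum_subtractf)
lemma ipS_diff1: "ipS S (g - h) f = ipS S g f - ipS S h f"
  by (simp add: ipS_def algebra_simps sum_subtractf)
lemma ipS_scale2: "ipS S f (\<lambda>w. t * g w) = t * ipS S f g"
  by (simp add: ipS_def algebra_simps sum_distrib_left)
lemma ipS_scale1: "ipS S (\<lambda>w. t * g w) f = t * ipS S g f"
  by (simp add: ipS_def algebra_simps sum_distrib_left)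
lemma ipS_zero2: "ipS S f 0 = 0"
  by (simp add: ipS_def)
lemma ipS_comm: "ipS S f g = ipS S g f"
  by (simp add: ipS_def mult.commute)

lemma ipS_self_zero:
  assumes "finite S" "ipS S u u = 0" "w \<in> S" shows "u w = 0"
proof -
  have "\<forall>w\<in>S. u w * u w = 0"
    using assms(2) unfolding ipS_def
    by (subst sum_nonneg_eq_0_iff[symmetric]) (auto simp: assms(1))
  thus ?thesis using assms(3) by auto
qed

lemma ipS_zero_on:
  assumes "\<forall>w\<in>S. u w = 0" shows "ipS S r u = 0"
  using assms by (simp add: ipS_def)

lemma orth_span:
  assumes "\<forall>b\<in>B. ipS S r b = 0" "x \<in> fv.span B"
  shows "ipS S r x = 0"
proof -
  have "fv.subspace {x. ipS S r x = 0}"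
    unfolding fv.subspace_def by (auto simp: ipS_add2 ipS_scale2 ipS_zero2)
  thus ?thesis using fv.span_induct[OF assms(2), of "\<lambda>x. ipS S r x = 0"] assms(1) by auto
qed

lemma proj_exists:
  assumes "finite B" "finite S"
  shows "\<exists>c0 \<in> fv.span B. \<forall>b\<in>B. ipS S (c - c0) b = 0"
  using assms(1)
proof (induction B arbitrary: c rule: finite_induct)
  case empty
  show ?case by (auto intro: fv.span_zero)
next
  case (insert v F)
  obtain c0 where c0: "c0 \<in> fv.span F" "\<forall>b\<in>F. ipS S (c - c0) b = 0"
    using insert.IH by blast
  obtain v0 where v0: "v0 \<in> fv.span F" "\<forall>b\<in>F. ipS S (v - v0) b = 0"
    using insert.IH by blast
  define r where "r = c - c0"
  define u where "u = v - v0"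
  have sub: "fv.span F \<subseteq> fv.span (insert v F)" by (rule fv.span_mono) auto
  have vsplit: "v = u + v0" unfolding u_def by simp
  show ?case
  proof (cases "ipS S u u = 0")
    case True
    have u0: "\<forall>w\<in>S. u w = 0" using ipS_self_zero[OF assms(2) True] by blast
    have "ipS S r v = 0"
      unfolding vsplit ipS_add2 using ipS_zero_on[OF u0] orth_span[OF _ v0(1)] c0(2) r_def by auto
    thus ?thesis using c0 sub r_def by blast
  next
    case False
    define t where "t = ipS S r u / ipS S u u"
    define c1 where "c1 = c0 + (\<lambda>w. t * u w)"
    have uin: "u \<in> fv.span (insert v F)"
      unfolding u_def by (rule fv.span_diff) (use sub v0(1) fv.span_base[of v "insert v F"] in auto)
    have c1in: "c1 \<in> fv.span (insert v F)"
      unfolding c1_def by (rule fv.span_add) (use sub c0(1) uin fv.span_scale in auto)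
    have r1: "c - c1 = r - (\<lambda>w. t * u w)" unfolding c1_def r_def by (simp add: algebra_simps)
    have uF: "\<forall>b\<in>F. ipS S u b = 0" using v0(2) u_def by simp
    have oF: "\<forall>b\<in>F. ipS S (c - c1) b = 0"
      unfolding r1 using c0(2) uF by (simp add: ipS_diff1 ipS_scale1 r_def)
    have ou: "ipS S (c - c1) u = 0"
      unfolding r1 ipS_diff1 ipS_scale1 t_def using False by simp
    have "ipS S (c - c1) v = 0"
      unfolding vsplit ipS_add2 using ou orth_span[OF oF v0(1)] by simp
    thus ?thesis using oF c1in by blast
  qed
qed



lemma sum_fun_apply: "(sum F A) v = (\<Sum>a\<in>A. F a v)"
proof (cases "finite A")
  case True thus ?thesis by (induction A rule: finite_induct) auto
qed simp

lemma abstract_main: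
  fixes S :: "'w set" and mon :: "'w \<Rightarrow> 'x \<Rightarrow> real" and Hs :: "'h set" and act :: "'h \<Rightarrow> 'x \<Rightarrow> 'x"
    and K :: "'h \<Rightarrow> 'w \<Rightarrow> 'w \<Rightarrow> real" and E :: "'x set" and c :: "'w \<Rightarrow> real"
  assumes finS: "finite S"
    and monact: "\<forall>h\<in>Hs. \<forall>w\<in>S. \<forall>x. mon w (act h x) = (\<Sum>w'\<in>S. K h w w' * mon w' x)"
    and transp: "\<forall>h\<in>Hs. \<exists>h'\<in>Hs. \<forall>w\<in>S. \<forall>w'\<in>S. K h' w w' = K h w' w"
    and Ecl: "\<forall>h\<in>Hs. \<forall>x\<in>E. act h x \<in> E"
    and csupp: "\<forall>w. w \<notin> S \<longrightarrow> c w = 0"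
    and cinv: "\<forall>h\<in>Hs. \<forall>x\<in>E. (\<Sum>w\<in>S. c w * mon w (act h x)) = (\<Sum>w\<in>S. c w * mon w x)"
  shows "\<exists>c1. (\<forall>h\<in>Hs. \<forall>x. (\<Sum>w\<in>S. c1 w * mon w (act h x)) = (\<Sum>w\<in>S. c1 w * mon w x))
            \<and> (\<forall>x\<in>E. (\<Sum>w\<in>S. c1 w * mon w x) = (\<Sum>w\<in>S. c w * mon w x))"
proof -
  define ev where "ev = (\<lambda>f x. \<Sum>w\<in>S. f w * mon w x)"
  define tr where "tr = (\<lambda>h f w'. if w' \<in> S then \<Sum>w\<in>S. f w * K h w w' else 0)"
  have ev_tr: "ev f (act h x) = ev (tr h f) x" if h: "h \<in> Hs" for h f x
  proof -
    have "ev f (act h x) = (\<Sum>w\<in>S. f w * (\<Sum>w'\<in>S. K h w w' * mon w' x))"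
      unfolding ev_def using monact h by (intro sum.cong) auto
    also have "\<dots> = (\<Sum>w\<in>S. \<Sum>w'\<in>S. f w * K h w w' * mon w' x)"
      by (simp add: sum_distrib_left mult.assoc)
    also have "\<dots> = (\<Sum>w'\<in>S. \<Sum>w\<in>S. f w * K h w w' * mon w' x)"
      by (rule sum.swap)
    also have "\<dots> = ev (tr h f) x"
      unfolding ev_def tr_def by (simp add: sum_distrib_right)
    finally show ?thesis .
  qed
  have ev_diff: "ev (f - g) x = ev f x - ev g x" for f g x
    unfolding ev_def by (simp add: algebra_simps sum_subtractf)
  have adj: "ipS S (tr h f) g = ipS S f (tr h' g)"
    if hh: "\<forall>w\<in>S. \<forall>w'\<in>S. K h' w w' = K h w' w" for h h' f g
  proof -
    have "ipS S (tr h f) g = (\<Sum>w'\<in>S. \<Sum>w\<in>S. f w * K h w w' * g w')"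
      unfolding ipS_def tr_def by (simp add: sum_distrib_right)
    also have "\<dots> = (\<Sum>w\<in>S. \<Sum>w'\<in>S. f w * K h w w' * g w')"
      by (rule sum.swap)
    also have "\<dots> = ipS S f (tr h' g)"
      unfolding ipS_def tr_def using hh
      by (auto simp: sum_distrib_left mult_ac intro!: sum.cong)
    finally show ?thesis .
  qed
  define I where "I = {f. (\<forall>w. w \<notin> S \<longrightarrow> f w = 0) \<and> (\<forall>x\<in>E. ev f x = 0)}"
  have subI: "fv.subspace I"
    unfolding fv.subspace_def I_def ev_def
    by (auto simp: algebra_simps sum.distrib sum_distrib_left[symmetric])
  define Eb where "Eb = (\<lambda>w. (\<lambda>v. if v = w then 1 else 0 :: real)) ` S"
  have IEb: "I \<subseteq> fv.span Eb"
  proof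
    fix f assume f: "f \<in> I"
    have feq: "f = (\<Sum>w\<in>S. (\<lambda>v. f w * (if v = w then 1 else 0)))"
    proof
      fix v
      show "f v = (\<Sum>w\<in>S. (\<lambda>v. f w * (if v = w then 1 else 0))) v"
        unfolding sum_fun_apply using f finS by (cases "v \<in> S") (auto simp: I_def if_distrib cong: if_cong)
    qed
    have "(\<Sum>w\<in>S. (\<lambda>v. f w * (if v = w then 1 else 0))) \<in> fv.span Eb"
      by (rule fv.span_sum, rule fv.span_scale, rule fv.span_base) (auto simp: Eb_def)
    thus "f \<in> fv.span Eb" using feq by simp
  qed
  obtain B where B: "B \<subseteq> I" "fv.independent B" "I \<subseteq> fv.span B"
    using fv.maximal_independent_subset[of I] by blast
  have finB: "finite B"
    using fv.independent_span_bound[of Eb B] B IEb finS unfolding Eb_def by auto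
  obtain c0 where c0: "c0 \<in> fv.span B" "\<forall>b\<in>B. ipS S (c - c0) b = 0"
    using proj_exists[OF finB finS] by blast
  have c0I: "c0 \<in> I" using fv.span_minimal[OF B(1) subI] c0(1) by blast
  have orthI: "ipS S (c - c0) i = 0" if "i \<in> I" for i
    using orth_span[OF c0(2)] B(3) that by blast
  define c1 where "c1 = c - c0"
  have c1supp: "\<forall>w. w \<notin> S \<longrightarrow> c1 w = 0" using csupp c0I unfolding c1_def I_def by auto
  have inv: "ev c1 (act h x) = ev c1 x" if h: "h \<in> Hs" for h x
  proof -
    obtain h' where h': "h' \<in> Hs" "\<forall>w\<in>S. \<forall>w'\<in>S. K h' w w' = K h w' w" using transp h by blast
    define \<delta> where "\<delta> = tr h c1 - c1"
    have dI: "\<delta> \<in> I"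
    proof -
      have "\<forall>w. w \<notin> S \<longrightarrow> \<delta> w = 0" using c1supp unfolding \<delta>_def tr_def by auto
      moreover have "ev \<delta> y = 0" if y: "y \<in> E" for y
      proof -
        have "ev \<delta> y = ev c1 (act h y) - ev c1 y" unfolding \<delta>_def ev_diff ev_tr[OF h] ..
        also have "\<dots> = (ev c (act h y) - ev c0 (act h y)) - (ev c y - ev c0 y)"
          unfolding c1_def ev_diff ..
        also have "\<dots> = 0"
          using cinv h y c0I Ecl unfolding I_def ev_def by auto
        finally show ?thesis .
      qed
      ultimately show ?thesis unfolding I_def by auto
    qed
    have dorth: "ipS S \<delta> i = 0" if i: "i \<in> I" for i
    proof -
      have tri: "tr h' i \<in> I"
      proof -
        have "ev (tr h' i) y = 0" if "y \<in> E" for y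
          using ev_tr[OF h'(1), of i y, symmetric] i that Ecl h'(1) unfolding I_def by auto
        thus ?thesis unfolding I_def tr_def by auto
      qed
      have "ipS S \<delta> i = ipS S (tr h c1) i - ipS S c1 i" unfolding \<delta>_def ipS_diff1 ..
      also have "\<dots> = ipS S c1 (tr h' i) - ipS S c1 i" using adj[OF h'(2)] by simp
      also have "\<dots> = 0" using orthI[OF tri] orthI[OF i] unfolding c1_def by simp
      finally show ?thesis .
    qed
    have "\<forall>w\<in>S. \<delta> w = 0" using ipS_self_zero[OF finS dorth[OF dI]] by blast
    hence "ev \<delta> x = 0" unfolding ev_def by simp
    thus ?thesis unfolding \<delta>_def ev_diff ev_tr[OF h] by simp
  qed
  have onE: "ev c1 x = ev c x" if "x \<in> E" for x
    using c0I that unfolding c1_def ev_diff I_def by auto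
  show ?thesis using inv onE unfolding ev_def by blast
qed



definition mmon :: "'z list \<Rightarrow> ('z \<Rightarrow> real) \<Rightarrow> real" where
  "mmon w x = prod_list (map x w)"

lemma mon_append: "mmon (u @ v) x = mmon u x * mmon v x"
  by (simp add: mmon_def)

lemma poly_rep:
  assumes "P \<in> poly_on Z"
  shows "\<exists>F c. finite F \<and> (\<forall>w\<in>F. set w \<subseteq> Z) \<and> (\<forall>x. P x = (\<Sum>w\<in>F. c w * mmon w x))"
  using assms
proof (induction rule: poly_on.induct)
  case (const c)
  show ?case by (rule exI[of _ "{[]}"], rule exI[of _ "\<lambda>_. c"]) (simp add: mmon_def)
next
  case (coord z)
  thus ?case by (intro exI[of _ "{[z]}"] exI[of _ "\<lambda>_. 1"]) (simp add: mmon_def)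
next
  case (add P Q)
  then obtain F1 c1 F2 c2 where h1: "finite F1" "\<forall>w\<in>F1. set w \<subseteq> Z" "\<forall>x. P x = (\<Sum>w\<in>F1. c1 w * mmon w x)"
    and h2: "finite F2" "\<forall>w\<in>F2. set w \<subseteq> Z" "\<forall>x. Q x = (\<Sum>w\<in>F2. c2 w * mmon w x)" by blast
  define c where "c w = (if w \<in> F1 then c1 w else 0) + (if w \<in> F2 then c2 w else 0)" for w
  have "P x + Q x = (\<Sum>w\<in>F1 \<union> F2. c w * mmon w x)" for x
  proof -
    have a: "(\<Sum>w\<in>F1 \<union> F2. (if w \<in> F1 then c1 w else 0) * mmon w x) = (\<Sum>w\<in>F1. c1 w * mmon w x)"
      by (rule sum.mono_neutral_cong_right) (use h1 h2 in auto)
    have b: "(\<Sum>w\<in>F1 \<union> F2. (if w \<in> F2 then c2 w else 0) * mmon w x) = (\<Sum>w\<in>F2. c2 w * mmon w x)"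
      by (rule sum.mono_neutral_cong_right) (use h1 h2 in auto)
    show ?thesis using a b h1 h2 unfolding c_def by (simp add: distrib_right sum.distrib)
  qed
  thus ?case using h1 h2 by (intro exI[of _ "F1 \<union> F2"] exI[of _ c]) auto
next
  case (mult P Q)
  then obtain F1 c1 F2 c2 where h1: "finite F1" "\<forall>w\<in>F1. set w \<subseteq> Z" "\<forall>x. P x = (\<Sum>w\<in>F1. c1 w * mmon w x)"
    and h2: "finite F2" "\<forall>w\<in>F2. set w \<subseteq> Z" "\<forall>x. Q x = (\<Sum>w\<in>F2. c2 w * mmon w x)" by blast
  define f where "f = (\<lambda>(u::'a list, v::'a list). u @ v)"
  define F where "F = f ` (F1 \<times> F2)"
  define c where "c w = (\<Sum>uv\<in>{uv \<in> F1 \<times> F2. f uv = w}. c1 (fst uv) * c2 (snd uv))" for w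
  have finF: "finite F" unfolding F_def using h1 h2 by auto
  have "P x * Q x = (\<Sum>w\<in>F. c w * mmon w x)" for x
  proof -
    have "P x * Q x = (\<Sum>u\<in>F1. \<Sum>v\<in>F2. c1 u * mmon u x * (c2 v * mmon v x))"
      using h1 h2 by (simp add: sum_product)
    also have "\<dots> = (\<Sum>uv\<in>F1 \<times> F2. c1 (fst uv) * c2 (snd uv) * mmon (f uv) x)"
      unfolding sum.cartesian_product f_def by (intro sum.cong) (auto simp: mon_append mult_ac)
    also have "\<dots> = (\<Sum>w\<in>F. \<Sum>uv\<in>{uv \<in> F1 \<times> F2. f uv = w}. c1 (fst uv) * c2 (snd uv) * mmon (f uv) x)"
      unfolding F_def by (rule sum.image_gen) (use h1 h2 in auto)
    also have "\<dots> = (\<Sum>w\<in>F. c w * mmon w x)"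
      unfolding c_def sum_distrib_right by (intro sum.cong refl) auto
    finally show ?thesis .
  qed
  moreover have "\<forall>w\<in>F. set w \<subseteq> Z" using h1 h2 unfolding F_def f_def by auto
  ultimately show ?case using finF by (intro exI[of _ F] exI[of _ c]) auto
qed

definition Sd :: "'z set \<Rightarrow> nat \<Rightarrow> 'z list set" where
  "Sd Z d = {w. set w \<subseteq> Z \<and> length w \<le> d}"

lemma finite_Sd: "finite Z \<Longrightarrow> finite (Sd Z d)"
  unfolding Sd_def by (rule finite_lists_length_le)

lemma poly_rep_Sd:
  assumes "P \<in> poly_on Z" "finite Z"
  shows "\<exists>d c. (\<forall>w. w \<notin> Sd Z d \<longrightarrow> c w = 0) \<and> (\<forall>x. P x = (\<Sum>w\<in>Sd Z d. c w * mmon w x))"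
proof -
  obtain F c where h: "finite F" "\<forall>w\<in>F. set w \<subseteq> Z" "\<forall>x. P x = (\<Sum>w\<in>F. c w * mmon w x)"
    using poly_rep[OF assms(1)] by blast
  define d where "d = Max (insert 0 (length ` F))"
  have FS: "F \<subseteq> Sd Z d" unfolding Sd_def d_def using h by auto
  define c' where "c' w = (if w \<in> F then c w else 0)" for w
  have e: "(\<Sum>w\<in>Sd Z d. c' w * mmon w x) = (\<Sum>w\<in>F. c w * mmon w x)" for x
    unfolding c'_def by (rule sum.mono_neutral_cong_right) (use FS finite_Sd[OF assms(2)] in auto)
  have "P x = (\<Sum>w\<in>Sd Z d. c' w * mmon w x)" for x
    using h(3) e by simp
  moreover have "\<forall>w. w \<notin> Sd Z d \<longrightarrow> c' w = 0" using FS unfolding c'_def by auto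
  ultimately show ?thesis by blast
qed

lemma mon_poly: "set w \<subseteq> Z \<Longrightarrow> (\<lambda>x. mmon w x) \<in> poly_on Z"
proof (induction w)
  case Nil thus ?case using poly_on.const[of 1 Z] by (simp add: mmon_def)
next
  case (Cons a w)
  hence "(\<lambda>x. x a * mmon w x) \<in> poly_on Z" by (intro poly_on.mult poly_on.coord) auto
  thus ?case by (simp add: mmon_def)
qed

lemma sum_poly: "finite A \<Longrightarrow> (\<forall>a\<in>A. (\<lambda>x. f a x) \<in> poly_on Z) \<Longrightarrow> (\<lambda>x. \<Sum>a\<in>A. f a x) \<in> poly_on Z"
proof (induction A rule: finite_induct)
  case empty thus ?case using poly_on.const[of 0 Z] by simp
next
  case (insert a A) thus ?case by (auto intro!: poly_on.add)
qed

lemma ev_poly: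
  assumes "finite S" "\<forall>w\<in>S. set w \<subseteq> Z"
  shows "(\<lambda>x. \<Sum>w\<in>S. c w * mmon w x) \<in> poly_on Z"
  using assms by (intro sum_poly) (auto intro!: poly_on.mult poly_on.const mon_poly)

fun Kl :: "('z \<Rightarrow> 'z \<Rightarrow> real) \<Rightarrow> 'z list \<Rightarrow> 'z list \<Rightarrow> real" where
  "Kl M [] [] = 1"
| "Kl M (a # w) (b # w') = M a b * Kl M w w'"
| "Kl M _ _ = 0"

lemma Kl_len: "length w \<noteq> length w' \<Longrightarrow> Kl M w w' = 0"
  by (induction M w w' rule: Kl.induct) auto

lemma Kl_transp:
  assumes "\<forall>z\<in>Z. \<forall>z'\<in>Z. M' z z' = M z' z"
  shows "set w \<subseteq> Z \<Longrightarrow> set w' \<subseteq> Z \<Longrightarrow> Kl M' w w' = Kl M w' w"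
proof (induction w arbitrary: w')
  case Nil thus ?case by (cases w') auto
next
  case (Cons a w) thus ?case using assms by (cases w') auto
qed

lemma lists_Suc: "{w. set w \<subseteq> Z \<and> length w = Suc n} = (\<lambda>(z, w). z # w) ` (Z \<times> {w. set w \<subseteq> Z \<and> length w = n})"
  by (auto simp: length_Suc_conv image_iff)

lemma mon_lin:
  assumes finZ: "finite Z" and y: "\<forall>z\<in>Z. y z = (\<Sum>z'\<in>Z. M z z' * x z')"
  shows "set w \<subseteq> Z \<Longrightarrow> mmon w y = (\<Sum>w'\<in>{w'. set w' \<subseteq> Z \<and> length w' = length w}. Kl M w w' * mmon w' x)"
proof (induction w)
  case Nil
  have "{w'. set w' \<subseteq> Z \<and> length w' = 0} = {[]}" by auto
  thus ?case by (simp add: mmon_def)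
next
  case (Cons a w)
  let ?L = "{w'. set w' \<subseteq> Z \<and> length w' = length w}"
  let ?g = "\<lambda>w'. Kl M (a # w) w' * mmon w' x"
  have "mmon (a # w) y = y a * mmon w y" by (simp add: mmon_def)
  also have "\<dots> = (\<Sum>z'\<in>Z. M a z' * x z') * (\<Sum>w'\<in>?L. Kl M w w' * mmon w' x)"
    using Cons y by simp
  also have "\<dots> = (\<Sum>z'\<in>Z. \<Sum>w'\<in>?L. M a z' * x z' * (Kl M w w' * mmon w' x))"
    by (rule sum_product)
  also have "\<dots> = (\<Sum>z'\<in>Z. \<Sum>w'\<in>?L. ?g (z' # w'))"
    by (intro sum.cong refl) (simp add: mmon_def)
  also have "\<dots> = (\<Sum>(z', w')\<in>Z \<times> ?L. ?g (z' # w'))"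
    by (rule sum.cartesian_product)
  also have "\<dots> = (\<Sum>w'\<in>(\<lambda>(z, w). z # w) ` (Z \<times> ?L). ?g w')"
  proof -
    have inj: "inj_on (\<lambda>(z, w). z # w) (Z \<times> ?L)" by (auto simp: inj_on_def)
    show ?thesis unfolding sum.reindex[OF inj] by (simp add: comp_def case_prod_beta)
  qed
  also have "(\<lambda>(z, w). z # w) ` (Z \<times> ?L) = {w'. set w' \<subseteq> Z \<and> length w' = length (a # w)}"
    using lists_Suc[of Z "length w"] by simp
  finally show ?case .
qed

lemma mon_lin_Sd:
  assumes finZ: "finite Z" and y: "\<forall>z\<in>Z. y z = (\<Sum>z'\<in>Z. M z z' * x z')" and w: "w \<in> Sd Z d"
  shows "mmon w y = (\<Sum>w'\<in>Sd Z d. Kl M w w' * mmon w' x)"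
proof -
  have "mmon w y = (\<Sum>w'\<in>{w'. set w' \<subseteq> Z \<and> length w' = length w}. Kl M w w' * mmon w' x)"
    using mon_lin[OF finZ y] w unfolding Sd_def by auto
  also have "\<dots> = (\<Sum>w'\<in>Sd Z d. Kl M w w' * mmon w' x)"
  proof (rule sum.mono_neutral_left)
    show "finite (Sd Z d)" using finite_Sd[OF finZ] .
    show "{w'. set w' \<subseteq> Z \<and> length w' = length w} \<subseteq> Sd Z d" using w by (auto simp: Sd_def)
    show "\<forall>i\<in>Sd Z d - {w'. set w' \<subseteq> Z \<and> length w' = length w}. Kl M w i * mmon i x = 0"
      using Kl_len[of w _ M] by (auto simp: Sd_def) metis
  qed
  finally show ?thesis .
qed



lemma eta_sq: "eta p i * eta p i = 1"
  by (simp add: eta_def)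

lemma Ogrp_transpose:
  assumes A: "A \<in> Ogrp p q"
  shows "(\<lambda>i j. A j i) \<in> Ogrp p q"
proof -
  let ?n = "p + q"
  define Am where "Am = mat ?n ?n (\<lambda>(i,j). A i j)"
  define Bm where "Bm = mat ?n ?n (\<lambda>(i,j). eta p i * A j i * eta p j)"
  have cA: "Am \<in> carrier_mat ?n ?n" and cB: "Bm \<in> carrier_mat ?n ?n"
    unfolding Am_def Bm_def by auto
  have "Bm * Am = 1\<^sub>m ?n"
  proof (rule eq_matI)
    fix i j assume ij: "i < dim_row (1\<^sub>m ?n :: real mat)" "j < dim_col (1\<^sub>m ?n :: real mat)"
    hence ij': "i < ?n" "j < ?n" by auto
    have "(Bm * Am) $$ (i, j) = (\<Sum>l<?n. eta p i * A l i * eta p l * A l j)"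
      using ij' unfolding Am_def Bm_def
      by (simp add: scalar_prod_def atLeast0LessThan)
    also have "\<dots> = eta p i * (\<Sum>l<?n. A l i * eta p l * A l j)"
      by (simp add: sum_distrib_left mult_ac)
    also have "\<dots> = (if i = j then 1 else 0)"
      using A ij' unfolding Ogrp_def by (simp add: eta_sq)
    finally show "(Bm * Am) $$ (i, j) = 1\<^sub>m ?n $$ (i, j)" using ij' by simp
  qed (use cA cB in auto)
  hence AB: "Am * Bm = 1\<^sub>m ?n" using mat_mult_left_right_inverse[OF cB cA] by simp
  show ?thesis unfolding Ogrp_def
  proof (intro CollectI allI impI)
    fix i j assume ij': "i < ?n" "j < ?n"
    have "(Am * Bm) $$ (i, j) = (\<Sum>l<?n. A i l * (eta p l * A j l * eta p j))"
      using ij' unfolding Am_def Bm_def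
      by (simp add: scalar_prod_def atLeast0LessThan)
    also have "\<dots> = (\<Sum>l<?n. A i l * eta p l * A j l) * eta p j"
      by (simp add: sum_distrib_right sum_distrib_left mult_ac)
    finally have e: "(\<Sum>l<?n. A i l * eta p l * A j l) * eta p j = (if i = j then 1 else 0)"
      using AB ij' by simp
    have "(\<Sum>l<?n. A i l * eta p l * A j l) = (\<Sum>l<?n. A i l * eta p l * A j l) * eta p j * eta p j"
      by (simp add: mult.assoc eta_sq)
    also have "\<dots> = (if i = j then eta p i else 0)" using e by simp
    finally show "(\<Sum>l<?n. A i l * eta p l * A j l) = (if i = j then eta p i else 0)" .
  qed
qed

definition Mh :: "nat \<Rightarrow> nat \<Rightarrow> (nat \<Rightarrow> nat) \<Rightarrow> (nat \<Rightarrow> nat)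
    \<Rightarrow> (nat \<Rightarrow> nat \<Rightarrow> real) \<times> (nat \<Rightarrow> nat \<Rightarrow> real)
    \<Rightarrow> nat \<times> nat list \<times> nat list \<Rightarrow> nat \<times> nat list \<times> nat list \<Rightarrow> real" where
  "Mh p p' r s h z z' = (case z of (i, I, J) \<Rightarrow> case z' of (i', I', J') \<Rightarrow>
     if i' = i then (\<Prod>a<r i. Oinv p (fst h) (I' ! a) (I ! a)) * (\<Prod>b<s i. Oinv p' (snd h) (J' ! b) (J ! b))
     else 0)"

lemma finite_tuples: "finite (tuples d r)"
proof -
  have "tuples d r = {xs. set xs \<subseteq> {..<d} \<and> length xs = r}" unfolding tuples_def by auto
  thus ?thesis using finite_lists_length_eq[of "{..<d}" r] by simp
qed

lemma Idx_Sigma: "Idx p q p' q' L r s = Sigma {..<L} (\<lambda>i. tuples (p+q) (r i) \<times> tuples (p'+q') (s i))"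
  unfolding Idx_def by auto

lemma finite_Idx: "finite (Idx p q p' q' L r s)"
  unfolding Idx_Sigma by (intro finite_SigmaI finite_cartesian_product finite_tuples) auto

lemma act_lin:
  assumes z: "z \<in> Idx p q p' q' L r s"
  shows "act p q p' q' L r s h x z = (\<Sum>z'\<in>Idx p q p' q' L r s. Mh p p' r s h z z' * x z')"
proof -
  obtain i I J where zi: "z = (i, I, J)" by (cases z) auto
  have iL: "i < L" using z zi unfolding Idx_def by auto
  let ?T1 = "tuples (p+q) (r i)" and ?T2 = "tuples (p'+q') (s i)"
  let ?f = "\<lambda>z'. Mh p p' r s h z z' * x z'"
  have sub: "(\<lambda>y. (i, y)) ` (?T1 \<times> ?T2) \<subseteq> Idx p q p' q' L r s" using iL unfolding Idx_def by auto
  have zero: "\<forall>z'\<in>Idx p q p' q' L r s - (\<lambda>y. (i, y)) ` (?T1 \<times> ?T2). ?f z' = 0"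
    unfolding zi Mh_def Idx_def by auto
  have "(\<Sum>z'\<in>(\<lambda>y. (i, y)) ` (?T1 \<times> ?T2). ?f z') = (\<Sum>z'\<in>Idx p q p' q' L r s. ?f z')"
    using sum.mono_neutral_left[OF finite_Idx sub zero] .
  hence "(\<Sum>z'\<in>Idx p q p' q' L r s. ?f z') = (\<Sum>z'\<in>(\<lambda>y. (i, y)) ` (?T1 \<times> ?T2). ?f z')" by simp
  also have "\<dots> = (\<Sum>y\<in>?T1 \<times> ?T2. ?f (i, y))"
    by (subst sum.reindex) (auto simp: inj_on_def)
  also have "\<dots> = (\<Sum>I'\<in>?T1. \<Sum>J'\<in>?T2. ?f (i, I', J'))"
    by (simp add: sum.cartesian_product case_prod_beta)
  also have "\<dots> = act p q p' q' L r s h x z"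
    unfolding act_def zi using z zi by (auto simp: Mh_def mult_ac intro!: sum.cong)
  finally show ?thesis by simp
qed

lemma Mh_transp:
  "Mh p p' r s (\<lambda>i j. fst h j i, \<lambda>i j. snd h j i) z z' = Mh p p' r s h z' z"
  unfolding Mh_def Oinv_def by (auto split: prod.splits simp: mult_ac)



theorem lemma4p1:
  fixes p q p' q' L :: nat and r s :: "nat \<Rightarrow> nat"
    and E :: "(nat \<times> nat list \<times> nat list \<Rightarrow> real) set"
    and P :: "(nat \<times> nat list \<times> nat list \<Rightarrow> real) \<Rightarrow> real"
  assumes "E \<subseteq> Tsp p q p' q' L r s"
    and "E \<noteq> {}"
    and "\<forall>h\<in>Hgrp p q p' q'. \<forall>x\<in>E. act p q p' q' L r s h x \<in> E"
    and "P \<in> poly_on (Idx p q p' q' L r s)"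
    and "\<forall>h\<in>Hgrp p q p' q'. \<forall>x\<in>E. P (act p q p' q' L r s h x) = P x"
  shows "\<exists>P'. P' \<in> poly_on (Idx p q p' q' L r s)
          \<and> (\<forall>h\<in>Hgrp p q p' q'. \<forall>x\<in>Tsp p q p' q' L r s. P' (act p q p' q' L r s h x) = P' x)
          \<and> (\<forall>x\<in>E. P' x = P x)"
proof -
  let ?Z = "Idx p q p' q' L r s"
  let ?act = "act p q p' q' L r s"
  let ?H = "Hgrp p q p' q'"
  have finZ: "finite ?Z" by (rule finite_Idx)
  obtain d c where c: "\<forall>w. w \<notin> Sd ?Z d \<longrightarrow> c w = 0" "\<forall>x. P x = (\<Sum>w\<in>Sd ?Z d. c w * mmon w x)"
    using poly_rep_Sd[OF assms(4) finZ] by blast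
  have monact: "\<forall>h\<in>?H. \<forall>w\<in>Sd ?Z d. \<forall>x. mmon w (?act h x) = (\<Sum>w'\<in>Sd ?Z d. Kl (Mh p p' r s h) w w' * mmon w' x)"
  proof (intro ballI allI)
    fix h w x assume "h \<in> ?H" "w \<in> Sd ?Z d"
    show "mmon w (?act h x) = (\<Sum>w'\<in>Sd ?Z d. Kl (Mh p p' r s h) w w' * mmon w' x)"
      by (rule mon_lin_Sd[OF finZ _ \<open>w \<in> Sd ?Z d\<close>]) (use act_lin in blast)
  qed
  have transp: "\<forall>h\<in>?H. \<exists>h'\<in>?H. \<forall>w\<in>Sd ?Z d. \<forall>w'\<in>Sd ?Z d. Kl (Mh p p' r s h') w w' = Kl (Mh p p' r s h) w' w"
  proof
    fix h assume h: "h \<in> ?H"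
    define h' where "h' = (\<lambda>i j. fst h j i, \<lambda>i j. snd h j i)"
    have "h' \<in> ?H" using h Ogrp_transpose unfolding h'_def Hgrp_def by (auto simp: mem_Times_iff)
    moreover have "\<forall>w\<in>Sd ?Z d. \<forall>w'\<in>Sd ?Z d. Kl (Mh p p' r s h') w w' = Kl (Mh p p' r s h) w' w"
      using Kl_transp[of ?Z "Mh p p' r s h'" "Mh p p' r s h"] Mh_transp unfolding h'_def Sd_def by auto
    ultimately show "\<exists>h'\<in>?H. \<forall>w\<in>Sd ?Z d. \<forall>w'\<in>Sd ?Z d. Kl (Mh p p' r s h') w w' = Kl (Mh p p' r s h) w' w"
      by blast
  qed
  have cinv: "\<forall>h\<in>?H. \<forall>x\<in>E. (\<Sum>w\<in>Sd ?Z d. c w * mmon w (?act h x)) = (\<Sum>w\<in>Sd ?Z d. c w * mmon w x)"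
    using assms(5) c(2) by simp
  obtain c1 where c1: "\<forall>h\<in>?H. \<forall>x. (\<Sum>w\<in>Sd ?Z d. c1 w * mmon w (?act h x)) = (\<Sum>w\<in>Sd ?Z d. c1 w * mmon w x)"
      "\<forall>x\<in>E. (\<Sum>w\<in>Sd ?Z d. c1 w * mmon w x) = (\<Sum>w\<in>Sd ?Z d. c w * mmon w x)"
    using abstract_main[OF finite_Sd[OF finZ] monact transp assms(3) c(1) cinv] by blast
  let ?P' = "\<lambda>x. \<Sum>w\<in>Sd ?Z d. c1 w * mmon w x"
  have "?P' \<in> poly_on ?Z" by (rule ev_poly) (use finite_Sd[OF finZ] in \<open>auto simp: Sd_def\<close>)
  moreover have "\<forall>h\<in>?H. \<forall>x\<in>Tsp p q p' q' L r s. ?P' (?act h x) = ?P' x" using c1(1) by blast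
  moreover have "\<forall>x\<in>E. ?P' x = P x" using c1(2) c(2) by simp
  ultimately show ?thesis by blast
qed

end
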